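(* Let $\theta$ be a parameter vector and let $u_\theta(x,y)$ and $s_\theta(x,y)$ be real-valued functions of $\theta$ (differentiable in $\theta$) for each prompt $x$ and response $y$. For a fixed triple $(x,y_w,y_l)$ put $\Delta u_\theta = u_\theta(x,y_w)-u_\theta(x,y_l)$, $\mu=\sigma(\Delta u_\theta)$ where $\sigma(t)=1/(1+e^{-t})$, and let $\tau=\tau(\theta)\in(0,\infty)$ be the concentration, namely $\tau=\mathrm{Softplus}(s_\theta(x,y_w))+\mathrm{Softplus}(s_\theta(x,y_l))+1$ with $\mathrm{Softplus}(t)=\log(1+e^t)$. Let $\alpha_0,\beta_0>0$ and $\lambda>0$ be fixed constants (independent of $\theta$), set $\alpha=\mu\tau$, $\beta=(1-\mu)\tau$, and define $$\mathcal{L}_{\mathrm{ICRM}} = -\bigl(\psi(\mu\tau)-\psi(\tau)\bigr) + \lambda\, \mathbb{D}_{\mathrm{KL}}\bigl(\mathrm{Beta}(\alpha,\beta)\,\|\,\mathrm{Beta}(\alpha_0,\beta_0)\bigr).$$ Let $\varepsilon := 1-\mu$. Then, for finite $\tau\in(0,\infty)$ held fixed, as $\varepsilon\to 0^+$, $$\nabla_\theta \mathcal{L}_{\mathrm{ICRM}} = c_u\,\nabla_\theta \Delta u_\theta + c_\tau\,\nabla_\theta \tau,\qquad c_u = \frac{\lambda\beta_0}{\varepsilon\tau}+O(1),\quad c_\tau = -\frac{\lambda\beta_0}{\varepsilon\tau^2}+O(1),$$ i.e. the utility coefficient behaves to leading order like $\lambda\beta_0/(\varepsilon\tau)$ and the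 confidence coefficient like $-\lambda\beta_0/(\varepsilon\tau^2)$.
   Context: $\psi(x)=\frac{d}{dx}\log\Gamma(x)$ is the digamma function. $\mathrm{Beta}(a,b)$ denotes the Beta distribution on $[0,1]$ with parameters $a,b>0$, and $\mathbb{D}_{\mathrm{KL}}(q\|p)$ is the Kullback–Leibler divergence, which for Betas has the closed form $\mathbb{D}_{\mathrm{KL}}(\mathrm{Beta}(\alpha,\beta)\|\mathrm{Beta}(\alpha_0,\beta_0)) = \log\frac{\Gamma(\alpha+\beta)}{\Gamma(\alpha)\Gamma(\beta)}-\log\frac{\Gamma(\alpha_0+\beta_0)}{\Gamma(\alpha_0)\Gamma(\beta_0)}+(\alpha-\alpha_0)[\psi(\alpha)-\psi(\alpha+\beta)]+(\beta-\beta_0)[\psi(\beta)-\psi(\alpha+\beta)]$. The gradient $\nabla_\theta\mathcal{L}_{\mathrm{ICRM}}$ is computed by the chain rule through $\mu=\sigma(\Delta u_\theta)$ and $\tau$, i.e. $\nabla_\theta\mathcal{L}=\frac{\partial\mathcal{L}}{\partial\mu}\mu(1-\mu)\nabla_\theta\Delta u_\theta+\frac{\partial\mathcal{L}}{\partial\tau}\nabla_\theta\tau$. *)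

theory Defs
  imports "HOL-Analysis.Analysis" "HOL-Library.Landau_Symbols"
begin

definition sigmoid :: "real \<Rightarrow> real" where
  "sigmoid t = 1 / (1 + exp (- t))"

definition softplus :: "real \<Rightarrow> real" where
  "softplus t = ln (1 + exp t)"

definition beta_KL :: "real \<Rightarrow> real \<Rightarrow> real \<Rightarrow> real \<Rightarrow> real" where
  "beta_KL a b a0 b0 =
     ln (Gamma (a + b) / (Gamma a * Gamma b))
   - ln (Gamma (a0 + b0) / (Gamma a0 * Gamma b0))
   + (a - a0) * (Digamma a - Digamma (a + b))
   + (b - b0) * (Digamma b - Digamma (a + b))"

definition icrm_loss :: "real \<Rightarrow> real \<Rightarrow> real \<Rightarrow> real \<Rightarrow> real \<Rightarrow> real" where
  "icrm_loss lam a0 b0 mu tau =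
     - (Digamma (mu * tau) - Digamma tau) + lam * beta_KL (mu * tau) ((1 - mu) * tau) a0 b0"

text \<open>Chain-rule coefficients: c_u = dL/dmu * mu (1 - mu), c_tau = dL/dtau.\<close>
definition coef_u :: "real \<Rightarrow> real \<Rightarrow> real \<Rightarrow> real \<Rightarrow> real \<Rightarrow> real" where
  "coef_u lam a0 b0 mu tau = deriv (\<lambda>m. icrm_loss lam a0 b0 m tau) mu * (mu * (1 - mu))"

definition coef_tau :: "real \<Rightarrow> real \<Rightarrow> real \<Rightarrow> real \<Rightarrow> real \<Rightarrow> real" where
  "coef_tau lam a0 b0 mu tau = deriv (\<lambda>t. icrm_loss lam a0 b0 mu t) tau"

end

theory Submission
  imports Defs
begin

definition Lm :: "real \<Rightarrow> real \<Rightarrow> real \<Rightarrow> real \<Rightarrow> real \<Rightarrow> real" where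
  "Lm lam a0 b0 m t = - t * Polygamma 1 (m*t) + lam * t * ((m*t - a0) * Polygamma 1 (m*t) - ((1-m)*t - b0) * Polygamma 1 ((1-m)*t))"

definition Lt :: "real \<Rightarrow> real \<Rightarrow> real \<Rightarrow> real \<Rightarrow> real \<Rightarrow> real" where
  "Lt lam a0 b0 m t = - m * Polygamma 1 (m*t) + Polygamma 1 t + lam * ((m*t - a0)*(m*Polygamma 1 (m*t) - Polygamma 1 t) + ((1-m)*t - b0)*((1-m)*Polygamma 1 ((1-m)*t) - Polygamma 1 t))"

lemma icrm_alt: "icrm_loss lam a0 b0 m t =
   - (Digamma (m * t) - Digamma t) + lam * (ln (Gamma t / (Gamma (m*t) * Gamma ((1-m)*t)))
     - ln (Gamma (a0 + b0) / (Gamma a0 * Gamma b0))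
     + (m*t - a0) * (Digamma (m*t) - Digamma t) + ((1-m)*t - b0) * (Digamma ((1-m)*t) - Digamma t))"
proof -
  have "m*t + (1-m)*t = t" by (simp add: algebra_simps)
  then show ?thesis by (simp add: icrm_loss_def beta_KL_def)
qed

lemma pos_notin: "(x::real) > 0 \<Longrightarrow> x \<notin> \<int>\<^sub>\<le>\<^sub>0"
  by (auto elim!: nonpos_Ints_cases)

lemma Pg_chain:
  fixes g :: "'a::real_normed_vector \<Rightarrow> real"
  shows "(g has_derivative g') (at x) \<Longrightarrow> g x > 0 \<Longrightarrow>
    ((\<lambda>x. Polygamma n (g x)) has_derivative (\<lambda>h. g' h * Polygamma (Suc n) (g x))) (at x)"
  by (rule DERIV_compose_FDERIV[OF has_field_derivative_Polygamma[OF pos_notin]])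

lemma Gm_chain:
  fixes g :: "'a::real_normed_vector \<Rightarrow> real"
  shows "(g has_derivative g') (at x) \<Longrightarrow> g x > 0 \<Longrightarrow>
    ((\<lambda>x. Gamma (g x)) has_derivative (\<lambda>h. g' h * (Gamma (g x) * Digamma (g x)))) (at x)"
  by (rule DERIV_compose_FDERIV[OF has_field_derivative_Gamma[OF pos_notin]])

lemma icrm_chain:
  fixes M T :: "'a::real_normed_vector \<Rightarrow> real"
  assumes M: "(M has_derivative M') (at x)" and T: "(T has_derivative T') (at x)"
    and m0: "0 < M x" and m1: "M x < 1" and t0: "T x > 0"
  shows "((\<lambda>x. icrm_loss lam a0 b0 (M x) (T x)) has_derivative
     (\<lambda>h. Lm lam a0 b0 (M x) (T x) * M' h + Lt lam a0 b0 (M x) (T x) * T' h)) (at x)"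
proof -
  have p1: "M x * T x > 0" using m0 t0 by simp
  have p2: "(1 - M x) * T x > 0" using m1 t0 by simp
  have g1: "Gamma (M x * T x) > 0" "Gamma ((1 - M x) * T x) > 0" "Gamma (T x) > 0"
    using p1 p2 t0 by auto
  have q: "0 < Gamma (T x) / (Gamma (M x * T x) * Gamma ((1 - M x) * T x))" using g1 by simp
  have nz: "Gamma (M x * T x) * Gamma ((1 - M x) * T x) \<noteq> 0" using g1 by simp
  show ?thesis
    unfolding icrm_alt
    apply (rule has_derivative_eq_rhs)
     apply (rule has_derivative_const has_derivative_add has_derivative_diff has_derivative_mult has_derivative_minus Pg_chain Gm_chain has_derivative_ln has_derivative_divide' M T
        p1 p2 t0 q nz)+
    apply (rule ext)
    using g1 apply (simp add: Lm_def Lt_def field_simps)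
    done
qed

lemma dL_m:
  assumes "0 < m" "m < 1" "0 < t"
  shows "((\<lambda>m. icrm_loss lam a0 b0 m t) has_real_derivative Lm lam a0 b0 m t) (at m)"
proof -
  have "((\<lambda>x. icrm_loss lam a0 b0 ((\<lambda>x. x) x) ((\<lambda>_. t) x)) has_derivative
     (\<lambda>h. Lm lam a0 b0 m t * h + Lt lam a0 b0 m t * 0)) (at m)"
    by (rule icrm_chain[where M="\<lambda>x. x" and T="\<lambda>_. t" and x=m, simplified])
       (use assms in auto)
  then show ?thesis unfolding has_field_derivative_def
    by (rule has_derivative_eq_rhs) (simp add: fun_eq_iff mult.commute)
qed

lemma dL_t:
  assumes "0 < m" "m < 1" "0 < t"
  shows "((\<lambda>t. icrm_loss lam a0 b0 m t) has_real_derivative Lt lam a0 b0 m t) (at t)"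
proof -
  have "((\<lambda>x. icrm_loss lam a0 b0 ((\<lambda>_. m) x) ((\<lambda>x. x) x)) has_derivative
     (\<lambda>h. Lm lam a0 b0 m t * 0 + Lt lam a0 b0 m t * h)) (at t)"
    by (rule icrm_chain[where T="\<lambda>x. x" and M="\<lambda>_. m" and x=t, simplified])
       (use assms in auto)
  then show ?thesis unfolding has_field_derivative_def
    by (rule has_derivative_eq_rhs) (simp add: fun_eq_iff mult.commute)
qed

lemma coef_u_eq: "0 < m \<Longrightarrow> m < 1 \<Longrightarrow> 0 < t \<Longrightarrow>
   coef_u lam a0 b0 m t = Lm lam a0 b0 m t * (m * (1 - m))"
  unfolding coef_u_def using DERIV_imp_deriv[OF dL_m] by simp

lemma coef_tau_eq: "0 < m \<Longrightarrow> m < 1 \<Longrightarrow> 0 < t \<Longrightarrow>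
   coef_tau lam a0 b0 m t = Lt lam a0 b0 m t"
  unfolding coef_tau_def using DERIV_imp_deriv[OF dL_t] by simp

lemma P1_split: "(z::real) \<noteq> 0 \<Longrightarrow> Polygamma 1 z = Polygamma 1 (z + 1) + 1 / z^2"
  using Polygamma_plus1[of z 1] by (simp add: power2_eq_square)

lemma bigo_const_lim:
  fixes G :: "real \<Rightarrow> real"
  assumes "isCont G 0" "eventually (\<lambda>e. f e = G e) (at_right 0)"
  shows "f \<in> O[at_right 0](\<lambda>_. 1)"
proof -
  have "(G \<longlongrightarrow> G 0) (at_right 0)"
    using assms(1) by (simp add: isCont_def filterlim_at_split)
  then have "G \<in> O[at_right 0](\<lambda>_. 1)"
    by (intro bigoI_tendsto[where c="G 0"]) auto
  then show ?thesis using landau_o.big.in_cong[OF assms(2)] by simp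
qed

lemma ev01: "eventually (\<lambda>e::real. 0 < e \<and> e < 1) (at_right 0)"
  unfolding eventually_at_right_field by (intro exI[of _ 1]) auto

lemma asym_u:
  assumes t: "t > 0"
  shows "(\<lambda>\<epsilon>. coef_u lam a0 b0 (1 - \<epsilon>) t - lam * b0 / (\<epsilon> * t)) \<in> O[at_right 0](\<lambda>_. 1)"
proof (rule bigo_const_lim[where G="\<lambda>e. (1-e)*e*(- t * Polygamma 1 ((1-e)*t)
     + lam*t*((1-e)*t - a0)*Polygamma 1 ((1-e)*t) - lam*t*(e*t-b0)*Polygamma 1 (e*t+1))
     - lam*(1-e) - lam*b0/t"])
  show "isCont (\<lambda>e. (1-e)*e*(- t * Polygamma 1 ((1-e)*t)
     + lam*t*((1-e)*t - a0)*Polygamma 1 ((1-e)*t) - lam*t*(e*t-b0)*Polygamma 1 (e*t+1))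
     - lam*(1-e) - lam*b0/t) 0"
    using t by (intro continuous_intros pos_notin) auto
  show "eventually (\<lambda>e. coef_u lam a0 b0 (1 - e) t - lam * b0 / (e * t) = (1-e)*e*(- t * Polygamma 1 ((1-e)*t)
     + lam*t*((1-e)*t - a0)*Polygamma 1 ((1-e)*t) - lam*t*(e*t-b0)*Polygamma 1 (e*t+1))
     - lam*(1-e) - lam*b0/t) (at_right 0)"
    using ev01
  proof (rule eventually_mono)
    fix e :: real assume e: "0 < e \<and> e < 1"
    have sp: "Polygamma 1 (e*t) = Polygamma 1 (e*t + 1) + 1/(e*t)^2"
      by (rule P1_split) (use e t in simp)
    have c: "coef_u lam a0 b0 (1-e) t = (- t * Polygamma 1 ((1-e)*t) + lam*t*(((1-e)*t - a0)*Polygamma 1 ((1-e)*t)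
        - (e*t - b0)*Polygamma 1 (e*t))) * ((1-e)*e)"
      using e t by (simp add: coef_u_eq Lm_def)
    show "coef_u lam a0 b0 (1 - e) t - lam * b0 / (e * t) = (1-e)*e*(- t * Polygamma 1 ((1-e)*t)
     + lam*t*((1-e)*t - a0)*Polygamma 1 ((1-e)*t) - lam*t*(e*t-b0)*Polygamma 1 (e*t+1))
     - lam*(1-e) - lam*b0/t"
      unfolding c sp using e t by (simp add: field_simps power2_eq_square)
  qed
qed

lemma asym_tau:
  assumes t: "t > 0"
  shows "(\<lambda>\<epsilon>. coef_tau lam a0 b0 (1 - \<epsilon>) t + lam * b0 / (\<epsilon> * t\<^sup>2)) \<in> O[at_right 0](\<lambda>_. 1)"
proof (rule bigo_const_lim[where G="\<lambda>e. - (1-e) * Polygamma 1 ((1-e)*t) + Polygamma 1 t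
    + lam * (((1-e)*t - a0)*((1-e)*Polygamma 1 ((1-e)*t) - Polygamma 1 t)
      + (e*t - b0)*(e*Polygamma 1 (e*t+1) - Polygamma 1 t) + 1/t)"])
  show "isCont (\<lambda>e. - (1-e) * Polygamma 1 ((1-e)*t) + Polygamma 1 t
    + lam * (((1-e)*t - a0)*((1-e)*Polygamma 1 ((1-e)*t) - Polygamma 1 t)
      + (e*t - b0)*(e*Polygamma 1 (e*t+1) - Polygamma 1 t) + 1/t)) 0"
    using t by (intro continuous_intros pos_notin) auto
  show "eventually (\<lambda>e. coef_tau lam a0 b0 (1 - e) t + lam * b0 / (e * t\<^sup>2) =
    - (1-e) * Polygamma 1 ((1-e)*t) + Polygamma 1 t
    + lam * (((1-e)*t - a0)*((1-e)*Polygamma 1 ((1-e)*t) - Polygamma 1 t)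
      + (e*t - b0)*(e*Polygamma 1 (e*t+1) - Polygamma 1 t) + 1/t)) (at_right 0)"
    using ev01
  proof (rule eventually_mono)
    fix e :: real assume e: "0 < e \<and> e < 1"
    have sp: "Polygamma 1 (e*t) = Polygamma 1 (e*t + 1) + 1/(e*t)^2"
      by (rule P1_split) (use e t in simp)
    have c: "coef_tau lam a0 b0 (1-e) t = - (1-e) * Polygamma 1 ((1-e)*t) + Polygamma 1 t
      + lam * (((1-e)*t - a0)*((1-e)*Polygamma 1 ((1-e)*t) - Polygamma 1 t)
      + (e*t - b0)*(e*Polygamma 1 (e*t) - Polygamma 1 t))"
      using e t by (simp add: coef_tau_eq Lt_def)
    show "coef_tau lam a0 b0 (1 - e) t + lam * b0 / (e * t\<^sup>2) =
    - (1-e) * Polygamma 1 ((1-e)*t) + Polygamma 1 t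
    + lam * (((1-e)*t - a0)*((1-e)*Polygamma 1 ((1-e)*t) - Polygamma 1 t)
      + (e*t - b0)*(e*Polygamma 1 (e*t+1) - Polygamma 1 t) + 1/t)"
      unfolding c sp using e t by (simp add: field_simps power2_eq_square)
  qed
qed

lemma sigmoid_deriv: "(sigmoid has_real_derivative sigmoid x * (1 - sigmoid x)) (at x)"
proof -
  have p: "1 + exp (- x) \<noteq> 0" by (smt (verit) exp_gt_zero)
  show ?thesis unfolding sigmoid_def
    apply (rule derivative_eq_intros refl)+
    using p apply simp
    using p apply (simp add: field_simps power2_eq_square)
    done
qed

lemma sigmoid_bounds: "0 < sigmoid x" "sigmoid x < 1"
proof -
  have e: "0 < exp (- x)" by simp
  then have e2: "0 < 1 + exp (- x)" by linarith
  show "0 < sigmoid x" unfolding sigmoid_def using e2 by simp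
  show "sigmoid x < 1" unfolding sigmoid_def using e e2 by (simp add: divide_less_eq)
qed

lemma softplus_pos: "0 < softplus x"
  unfolding softplus_def using exp_gt_zero[of x] by (intro ln_gt_zero) linarith

theorem lemma8p1:
  fixes u s :: "'x \<Rightarrow> 'y \<Rightarrow> 'a::real_normed_vector \<Rightarrow> real"
    and x :: 'x and yw yl :: 'y and lam a0 b0 :: real
  assumes "lam > 0" and "a0 > 0" and "b0 > 0"
    and "\<And>\<theta>. u x yw differentiable at \<theta>" and "\<And>\<theta>. u x yl differentiable at \<theta>"
    and "\<And>\<theta>. s x yw differentiable at \<theta>" and "\<And>\<theta>. s x yl differentiable at \<theta>"
  defines "du \<equiv> (\<lambda>\<theta>. u x yw \<theta> - u x yl \<theta>)"
    and "mu \<equiv> (\<lambda>\<theta>. sigmoid (u x yw \<theta> - u x yl \<theta>))"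
    and "tau \<equiv> (\<lambda>\<theta>. softplus (s x yw \<theta>) + softplus (s x yl \<theta>) + 1)"
  shows "(\<forall>\<theta>. ((\<lambda>\<theta>. icrm_loss lam a0 b0 (mu \<theta>) (tau \<theta>)) has_derivative
              (\<lambda>h. coef_u lam a0 b0 (mu \<theta>) (tau \<theta>) * frechet_derivative du (at \<theta>) h
                  + coef_tau lam a0 b0 (mu \<theta>) (tau \<theta>) * frechet_derivative tau (at \<theta>) h)) (at \<theta>))
       \<and> (\<forall>t>0. (\<lambda>\<epsilon>. coef_u lam a0 b0 (1 - \<epsilon>) t - lam * b0 / (\<epsilon> * t)) \<in> O[at_right 0](\<lambda>_. 1))
       \<and> (\<forall>t>0. (\<lambda>\<epsilon>. coef_tau lam a0 b0 (1 - \<epsilon>) t + lam * b0 / (\<epsilon> * t\<^sup>2)) \<in> O[at_right 0](\<lambda>_. 1))"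
proof (intro conjI allI impI)
  fix t :: real assume "t > 0"
  then show "(\<lambda>\<epsilon>. coef_u lam a0 b0 (1 - \<epsilon>) t - lam * b0 / (\<epsilon> * t)) \<in> O[at_right 0](\<lambda>_. 1)"
    by (rule asym_u)
next
  fix t :: real assume "t > 0"
  then show "(\<lambda>\<epsilon>. coef_tau lam a0 b0 (1 - \<epsilon>) t + lam * b0 / (\<epsilon> * t\<^sup>2)) \<in> O[at_right 0](\<lambda>_. 1)"
    by (rule asym_tau)
next
  fix \<theta> :: 'a
  have ddu: "du differentiable at \<theta>" unfolding du_def using assms(4,5) by (intro differentiable_diff) auto
  have sp: "(\<lambda>\<theta>. softplus (f \<theta>)) differentiable at \<theta>" if fd: "f differentiable at \<theta>" for f :: "'a \<Rightarrow> real"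
  proof -
    obtain f' where f': "(f has_derivative f') (at \<theta>)" using fd unfolding differentiable_def by blast
    have "((\<lambda>\<theta>. ln (1 + exp (f \<theta>))) has_derivative
       (\<lambda>h. (0 + f' h * exp (f \<theta>)) * inverse (1 + exp (f \<theta>)))) (at \<theta>)"
      by (intro has_derivative_ln has_derivative_add has_derivative_const has_derivative_exp f')
        (smt (verit) exp_gt_zero)
    then show ?thesis unfolding softplus_def differentiable_def by blast
  qed
  have dtau: "tau differentiable at \<theta>" unfolding tau_def
    using sp[OF assms(6)] sp[OF assms(7)] by (intro differentiable_add differentiable_const) auto
  define du' where "du' = frechet_derivative du (at \<theta>)"
  define tau' where "tau' = frechet_derivative tau (at \<theta>)"
  have Hdu: "(du has_derivative du') (at \<theta>)" unfolding du'_def using ddu frechet_derivative_works by blast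
  have Htau: "(tau has_derivative tau') (at \<theta>)" unfolding tau'_def using dtau frechet_derivative_works by blast
  have mu_eq: "mu = (\<lambda>\<theta>. sigmoid (du \<theta>))" unfolding mu_def du_def by simp
  have Hmu: "(mu has_derivative (\<lambda>h. du' h * (sigmoid (du \<theta>) * (1 - sigmoid (du \<theta>))))) (at \<theta>)"
    unfolding mu_eq by (rule DERIV_compose_FDERIV[OF sigmoid_deriv Hdu])
  have m0: "0 < mu \<theta>" "mu \<theta> < 1" unfolding mu_eq by (auto simp: sigmoid_bounds)
  have t0: "0 < tau \<theta>" unfolding tau_def using softplus_pos[of "s x yw \<theta>"] softplus_pos[of "s x yl \<theta>"] by simp
  have H: "((\<lambda>\<theta>. icrm_loss lam a0 b0 (mu \<theta>) (tau \<theta>)) has_derivative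
     (\<lambda>h. Lm lam a0 b0 (mu \<theta>) (tau \<theta>) * (du' h * (sigmoid (du \<theta>) * (1 - sigmoid (du \<theta>))))
        + Lt lam a0 b0 (mu \<theta>) (tau \<theta>) * tau' h)) (at \<theta>)"
    by (rule icrm_chain[OF Hmu Htau m0 t0])
  show "((\<lambda>\<theta>. icrm_loss lam a0 b0 (mu \<theta>) (tau \<theta>)) has_derivative
              (\<lambda>h. coef_u lam a0 b0 (mu \<theta>) (tau \<theta>) * frechet_derivative du (at \<theta>) h
                  + coef_tau lam a0 b0 (mu \<theta>) (tau \<theta>) * frechet_derivative tau (at \<theta>) h)) (at \<theta>)"
    unfolding du'_def[symmetric] tau'_def[symmetric]
  proof (rule has_derivative_eq_rhs[OF H])
    have cu: "coef_u lam a0 b0 (mu \<theta>) (tau \<theta>) = Lm lam a0 b0 (mu \<theta>) (tau \<theta>) * (mu \<theta> * (1 - mu \<theta>))"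
      by (rule coef_u_eq[OF m0 t0])
    have ct: "coef_tau lam a0 b0 (mu \<theta>) (tau \<theta>) = Lt lam a0 b0 (mu \<theta>) (tau \<theta>)"
      by (rule coef_tau_eq[OF m0 t0])
    have sm: "sigmoid (du \<theta>) = mu \<theta>" by (simp add: mu_eq)
    show "(\<lambda>h. Lm lam a0 b0 (mu \<theta>) (tau \<theta>) * (du' h * (sigmoid (du \<theta>) * (1 - sigmoid (du \<theta>))))
        + Lt lam a0 b0 (mu \<theta>) (tau \<theta>) * tau' h) =
      (\<lambda>h. coef_u lam a0 b0 (mu \<theta>) (tau \<theta>) * du' h + coef_tau lam a0 b0 (mu \<theta>) (tau \<theta>) * tau' h)"
      unfolding cu ct sm by (simp add: fun_eq_iff algebra_simps)
  qed
qed

end
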